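(* Let $(K_n,\Sigma)$ be a signed complete graph with $n\geq4$, and let $X(\Sigma)$ be the set of edges $vw$ of $K_n$ such that the triangle $uvw$ is even for every $u\in V(K_n)\setminus\{v,w\}$. Then there exists a signed complete graph $(K_k,\Sigma')$ with vertex set $\{v_1,\dots,v_k\}$ and complete graphs $H_1,\dots,H_k$ with $V(H_1),\dots,V(H_k)$ a partition of $V(K_n)$, such that $(K_n,\Sigma)$ is switching equivalent to the signed graph obtained from $(K_k,\Sigma')$ by substituting $v_i$ with $(H_i,\emptyset)$ for each $i\in[k]$, and $X(\Sigma)=\bigcup_{i=1}^kE(H_i)$.
   Context: A signed graph is a pair $(G,\Sigma)$ with $G$ a finite simple graph and $\Sigma\subseteq E(G)$ (odd edges; the others are even). A triangle $uvw$ is odd (resp. even) if $|\Sigma\cap\{uv,uw,vw\}|$ is odd (resp. even). Switching at a vertex $v$ replaces $\Sigma$ by $\Sigma\triangle\delta(v)$, where $\delta(v)$ is the set of edges incident with $v$; two signed graphs are switching equivalent if one is obtained from the other by a sequence of switchings. Substituting every vertex $v_i$ of $(K_k,\Sigma')$ with $(H_i,\emptyset)$ yields the signed complete graph on $\bigcup_iV(H_i)$ in which edges inside each $V(H_i)$ are even and every edge between $V(H_i)$ and $V(H_j)$ ($i\neq j$) is odd iff $v_iv_j\in\Sigma'$. *)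

theory Defs
  imports Main
begin

definition cedges :: "'a set \<Rightarrow> 'a set set" where
  "cedges V = {e. e \<subseteq> V \<and> card e = 2}"

text \<open>A signed complete graph on V: a set of odd edges Sigma, a subset of cedges V.\<close>
definition signed_complete :: "'a set \<Rightarrow> 'a set set \<Rightarrow> bool" where
  "signed_complete V S \<longleftrightarrow> S \<subseteq> cedges V"

definition delta :: "'a set \<Rightarrow> 'a \<Rightarrow> 'a set set" where
  "delta V v = {e \<in> cedges V. v \<in> e}"

definition switch :: "'a set \<Rightarrow> 'a \<Rightarrow> 'a set set \<Rightarrow> 'a set set" where
  "switch V v S = S \<union> delta V v - (S \<inter> delta V v)"

definition switch_step :: "'a set \<Rightarrow> 'a set set \<Rightarrow> 'a set set \<Rightarrow> bool" where
  "switch_step V S T \<longleftrightarrow> (\<exists>v\<in>V. T = switch V v S)"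

definition switching_equiv :: "'a set \<Rightarrow> 'a set set \<Rightarrow> 'a set set \<Rightarrow> bool" where
  "switching_equiv V S T \<longleftrightarrow> (switch_step V)\<^sup>*\<^sup>* S T"

definition even_triangle :: "'a set set \<Rightarrow> 'a \<Rightarrow> 'a \<Rightarrow> 'a \<Rightarrow> bool" where
  "even_triangle S u v w \<longleftrightarrow> even (card (S \<inter> {{u,v},{u,w},{v,w}}))"

definition Xset :: "'a set \<Rightarrow> 'a set set \<Rightarrow> 'a set set" where
  "Xset V S = {{v,w} | v w. v \<in> V \<and> w \<in> V \<and> v \<noteq> w \<and>
      (\<forall>u \<in> V - {v,w}. even_triangle S u v w)}"

text \<open>Substituting vertex i of (K_k, S') (vertex set {0..<k}) by (H_i, empty) where
  V(H_i) = P i: the resulting set of odd edges.\<close>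
definition substitute :: "nat \<Rightarrow> (nat \<Rightarrow> 'a set) \<Rightarrow> nat set set \<Rightarrow> 'a set set" where
  "substitute k P S' = {{x,y} | x y i j. i < k \<and> j < k \<and> i \<noteq> j \<and>
      x \<in> P i \<and> y \<in> P j \<and> {i,j} \<in> S'}"

end

theory Submission
  imports Defs
begin

definition sg :: "'a set set \<Rightarrow> 'a \<Rightarrow> 'a \<Rightarrow> bool" where
  "sg S x y \<longleftrightarrow> {x,y} \<in> S"

lemma sg_sym: "sg S x y = sg S y x"
  unfolding sg_def by (simp add: insert_commute)

lemma sg_refl: "S \<subseteq> cedges V \<Longrightarrow> \<not> sg S x x"
  unfolding sg_def cedges_def by auto

lemma cedges_iff: "e \<in> cedges V \<longleftrightarrow> (\<exists>x y. e = {x,y} \<and> x \<in> V \<and> y \<in> V \<and> x \<noteq> y)"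
  unfolding cedges_def by (auto simp: card_2_iff)

lemma card3_even:
  assumes "a \<noteq> b" "a \<noteq> c" "b \<noteq> c"
  shows "even (card (S \<inter> {a,b,c})) \<longleftrightarrow> ((a \<in> S) = ((b \<in> S) \<noteq> (c \<in> S)))"
  using assms by (cases "a\<in>S"; cases "b\<in>S"; cases "c\<in>S"; simp add: Int_insert_left)

lemma even_tri_iff:
  assumes "u \<noteq> v" "u \<noteq> w" "v \<noteq> w"
  shows "even_triangle S u v w \<longleftrightarrow> (sg S v w = (sg S u v \<noteq> sg S u w))"
proof -
  have "{u,v} \<noteq> {u,w}" "{u,v} \<noteq> {v,w}" "{u,w} \<noteq> {v,w}"
    using assms by (auto simp: doubleton_eq_iff)
  then show ?thesis unfolding even_triangle_def sg_def
    using card3_even[of "{u,v}" "{u,w}" "{v,w}" S] by auto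
qed

definition EQ :: "'a set \<Rightarrow> 'a set set \<Rightarrow> 'a \<Rightarrow> 'a \<Rightarrow> bool" where
  "EQ V S x y \<longleftrightarrow> x \<in> V \<and> y \<in> V \<and> (\<forall>u\<in>V. sg S x y = (sg S u x \<noteq> sg S u y))"

lemma X_char:
  assumes sc: "S \<subseteq> cedges V" and "x \<in> V" "y \<in> V" "x \<noteq> y"
  shows "{x,y} \<in> Xset V S \<longleftrightarrow> EQ V S x y"
proof -
  have A: "(\<forall>u\<in>V - {x,y}. even_triangle S u x y) \<longleftrightarrow> EQ V S x y"
  proof
    assume H: "\<forall>u\<in>V - {x,y}. even_triangle S u x y"
    show "EQ V S x y" unfolding EQ_def
    proof (intro conjI ballI)
      fix u assume u: "u \<in> V"
      show "sg S x y = (sg S u x \<noteq> sg S u y)"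
      proof (cases "u = x \<or> u = y")
        case True then show ?thesis using sg_refl[OF sc] sg_sym by (metis (full_types))
      next
        case False
        then show ?thesis using H u even_tri_iff[of u x y S] assms(4) by auto
      qed
    qed (use assms in auto)
  next
    assume "EQ V S x y"
    then show "\<forall>u\<in>V - {x,y}. even_triangle S u x y"
      unfolding EQ_def using even_tri_iff[of _ x y S] assms(4) by auto
  qed
  have B: "{x,y} \<in> Xset V S \<longleftrightarrow> (\<forall>u\<in>V - {x,y}. even_triangle S u x y)"
  proof
    assume "{x,y} \<in> Xset V S"
    then obtain v w where vw: "{x,y} = {v,w}" "\<forall>u\<in>V - {v,w}. even_triangle S u v w"
      unfolding Xset_def by blast
    from vw(1) have "(v = x \<and> w = y) \<or> (v = y \<and> w = x)" by (auto simp: doubleton_eq_iff)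
    then show "\<forall>u\<in>V - {x,y}. even_triangle S u x y"
    proof
      assume "v = x \<and> w = y" then show ?thesis using vw by auto
    next
      assume "v = y \<and> w = x" then show ?thesis using vw
        unfolding even_triangle_def by (auto simp: insert_commute)
    qed
  next
    assume "\<forall>u\<in>V - {x,y}. even_triangle S u x y"
    then show "{x,y} \<in> Xset V S" unfolding Xset_def using assms by blast
  qed
  show ?thesis using A B by simp
qed

lemma EQ_sym: "EQ V S x y \<Longrightarrow> EQ V S y x"
  unfolding EQ_def by (metis sg_sym)

lemma EQ_refl: "S \<subseteq> cedges V \<Longrightarrow> x \<in> V \<Longrightarrow> EQ V S x x"
  unfolding EQ_def using sg_refl by metis

lemma EQ_trans: "S \<subseteq> cedges V \<Longrightarrow> EQ V S x y \<Longrightarrow> EQ V S y z \<Longrightarrow> EQ V S x z"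
  unfolding EQ_def by (metis sg_sym)

definition symd :: "'b set \<Rightarrow> 'b set \<Rightarrow> 'b set" where
  "symd S D = S \<union> D - (S \<inter> D)"

definition cut :: "'a set \<Rightarrow> 'a set \<Rightarrow> 'a set set" where
  "cut V A = {e \<in> cedges V. \<exists>x y. e = {x,y} \<and> x \<in> A \<and> y \<notin> A}"

lemma cut_insert:
  assumes "v \<notin> A"
  shows "cut V (insert v A) = symd (cut V A) (delta V v)"
  unfolding cut_def symd_def delta_def cedges_iff
  using assms by (auto simp: doubleton_eq_iff)

lemma symd_assoc: "symd (symd S D1) D2 = symd S (symd D1 D2)"
  unfolding symd_def by blast

lemma switch_symd: "switch V v T = symd T (delta V v)"
  unfolding switch_def symd_def by blast

lemma switching_cut:
  assumes "finite A" "A \<subseteq> V"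
  shows "switching_equiv V S (symd S (cut V A))"
  using assms
proof (induction A rule: finite_induct)
  case empty
  have "cut V {} = {}" unfolding cut_def by auto
  then show ?case unfolding switching_equiv_def symd_def by simp
next
  case (insert v A)
  have "symd S (cut V (insert v A)) = switch V v (symd S (cut V A))"
    using insert(2) by (simp add: cut_insert switch_symd symd_assoc)
  moreover have "switch_step V (symd S (cut V A)) (switch V v (symd S (cut V A)))"
    unfolding switch_step_def using insert(4) by auto
  ultimately show ?case using insert unfolding switching_equiv_def
    by (metis insert_subset rtranclp.rtrancl_into_rtrancl)
qed

lemma cut_mem:
  assumes "x \<in> V" "y \<in> V" "x \<noteq> y"
  shows "{x,y} \<in> cut V A \<longleftrightarrow> (x \<in> A) \<noteq> (y \<in> A)"
  unfolding cut_def cedges_iff using assms by (auto simp: doubleton_eq_iff)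


theorem lemma3p7:
  fixes V :: "'a set" and S :: "'a set set"
  assumes "finite V" and "card V \<ge> 4" and "signed_complete V S"
  shows "\<exists>(k::nat) (P :: nat \<Rightarrow> 'a set) (S' :: nat set set).
           signed_complete {0..<k} S' \<and>
           (\<forall>i<k. P i \<noteq> {}) \<and>
           (\<forall>i<k. \<forall>j<k. i \<noteq> j \<longrightarrow> P i \<inter> P j = {}) \<and>
           (\<Union>i<k. P i) = V \<and>
           switching_equiv V S (substitute k P S') \<and>
           Xset V S = (\<Union>i<k. cedges (P i))"
proof -
  have sc: "S \<subseteq> cedges V" using assms(3) unfolding signed_complete_def .
  define r where "r x = (SOME z. EQ V S x z)" for x
  have r1: "EQ V S x (r x)" if "x \<in> V" for x
    unfolding r_def by (rule someI[of _ x]) (rule EQ_refl[OF sc that])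
  have r2: "r x = r y" if "EQ V S x y" for x y
  proof -
    have "EQ V S x z = EQ V S y z" for z
      using EQ_trans[OF sc that, of z] EQ_trans[OF sc EQ_sym[OF that], of z] by blast
    then have "(\<lambda>z. EQ V S x z) = (\<lambda>z. EQ V S y z)" by blast
    then show ?thesis unfolding r_def by simp
  qed
  have rV: "r x \<in> V" if "x \<in> V" for x using r1[OF that] unfolding EQ_def by auto
  have rr: "r (r x) = r x" if "x \<in> V" for x using r2[OF r1[OF that]] by simp
  have EQr: "EQ V S x y \<longleftrightarrow> x \<in> V \<and> y \<in> V \<and> r x = r y" for x y
  proof
    assume "EQ V S x y" then show "x \<in> V \<and> y \<in> V \<and> r x = r y"
      using r2 unfolding EQ_def by blast
  next
    assume H: "x \<in> V \<and> y \<in> V \<and> r x = r y"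
    then have "EQ V S x (r y)" "EQ V S (r y) y" using r1 EQ_sym by metis+
    then show "EQ V S x y" using EQ_trans[OF sc] by blast
  qed
  have L1: "sg S a b = (sg S z a \<noteq> sg S z b)" if "EQ V S a b" "z \<in> V" for a b z
    using that unfolding EQ_def by blast
  define A where "A = {x\<in>V. sg S (r x) x}"
  define R where "R = symd S (cut V A)"
  have key: "{x,y} \<in> R \<longleftrightarrow> sg S (r x) (r y)" if "x \<in> V" "y \<in> V" "x \<noteq> y" for x y
  proof -
    have "{x,y} \<in> R \<longleftrightarrow> sg S x y \<noteq> (sg S (r x) x \<noteq> sg S (r y) y)"
      unfolding R_def symd_def using cut_mem[OF that, of A] unfolding A_def sg_def
      using that by auto
    moreover have "sg S (r x) x = (sg S y (r x) \<noteq> sg S y x)"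
      using L1[OF EQ_sym[OF r1[OF that(1)]] that(2)] .
    moreover have "sg S (r y) y = (sg S (r x) (r y) \<noteq> sg S (r x) y)"
      using L1[OF EQ_sym[OF r1[OF that(2)]] rV[OF that(1)]] .
    moreover have "sg S y (r x) = sg S (r x) y" "sg S y x = sg S x y" using sg_sym by metis+
    ultimately show ?thesis by (cases "sg S x y"; cases "sg S (r x) y"; cases "sg S (r x) (r y)") simp_all
  qed
  define Rp where "Rp = r ` V"
  define k where "k = card Rp"
  have "finite Rp" unfolding Rp_def using assms(1) by simp
  then obtain h where h: "bij_betw h {0..<k} Rp" unfolding k_def
    using ex_bij_betw_nat_finite by blast
  have hinj: "i = j" if "i < k" "j < k" "h i = h j" for i j
    using h that unfolding bij_betw_def inj_on_def by auto
  have hsurj: "\<exists>i<k. h i = r x" if "x \<in> V" for x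
    using h that unfolding bij_betw_def Rp_def by (metis atLeastLessThan_iff imageE imageI)
  have hV: "\<exists>z\<in>V. h i = r z" if "i < k" for i
    using h that unfolding bij_betw_def Rp_def by auto
  define P where "P i = {x\<in>V. r x = h i}" for i
  define S' where "S' = {{i,j} | i j. i < k \<and> j < k \<and> i \<noteq> j \<and> sg S (h i) (h j)}"
  have c1: "signed_complete {0..<k} S'"
    unfolding signed_complete_def S'_def cedges_def by (auto simp: card_2_iff)
  have c2: "\<forall>i<k. P i \<noteq> {}"
  proof (intro allI impI)
    fix i assume "i < k"
    then obtain z where "z \<in> V" "h i = r z" using hV by blast
    then have "r z \<in> P i" unfolding P_def using rV rr by auto
    then show "P i \<noteq> {}" by auto
  qed
  have c3: "\<forall>i<k. \<forall>j<k. i \<noteq> j \<longrightarrow> P i \<inter> P j = {}"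
    unfolding P_def using hinj by auto
  have c4: "(\<Union>i<k. P i) = V"
    unfolding P_def using hsurj by (fastforce simp: lessThan_iff)
  have S'mem: "{i,j} \<in> S' \<longleftrightarrow> i < k \<and> j < k \<and> i \<noteq> j \<and> sg S (h i) (h j)" for i j
    unfolding S'_def by (auto simp: doubleton_eq_iff sg_sym)
  have RS: "R = substitute k P S'"
  proof (rule set_eqI)
    fix e show "e \<in> R \<longleftrightarrow> e \<in> substitute k P S'"
    proof
      assume e: "e \<in> R"
      have "R \<subseteq> cedges V" unfolding R_def symd_def cut_def using sc by auto
      with e have "e \<in> cedges V" by blast
      then obtain x y where xy: "e = {x,y}" "x \<in> V" "y \<in> V" "x \<noteq> y"
        unfolding cedges_iff by blast
      have s: "sg S (r x) (r y)" using key[OF xy(2-4)] e xy(1) by simp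
      obtain i where i: "i < k" "h i = r x" using hsurj[OF xy(2)] by blast
      obtain j where j: "j < k" "h j = r y" using hsurj[OF xy(3)] by blast
      have "i \<noteq> j" using s i j sg_refl[OF sc, of "r x"] by auto
      then have "{i,j} \<in> S'" using S'mem i j s by simp
      moreover have "x \<in> P i" "y \<in> P j" unfolding P_def using i j xy by auto
      ultimately show "e \<in> substitute k P S'" unfolding substitute_def
        using xy(1) i j \<open>i \<noteq> j\<close> by blast
    next
      assume "e \<in> substitute k P S'"
      then obtain x y i j where H: "e = {x,y}" "i < k" "j < k" "i \<noteq> j"
        "x \<in> P i" "y \<in> P j" "{i,j} \<in> S'"
        unfolding substitute_def by blast
      have s: "sg S (h i) (h j)" using S'mem H(7) by simp
      have xV: "x \<in> V" "r x = h i" "y \<in> V" "r y = h j" using H(5,6) unfolding P_def by auto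
      have "x \<noteq> y"
      proof
        assume "x = y" then have "h i = h j" using xV by simp
        then show False using hinj H(2-4) by blast
      qed
      then show "e \<in> R" using key[OF xV(1) xV(3)] s xV H(1) by simp
    qed
  qed
  have c5: "switching_equiv V S (substitute k P S')"
    unfolding RS[symmetric] R_def by (rule switching_cut) (use assms(1) A_def in auto)
  have c6: "Xset V S = (\<Union>i<k. cedges (P i))"
  proof (rule set_eqI)
    fix e show "e \<in> Xset V S \<longleftrightarrow> e \<in> (\<Union>i<k. cedges (P i))"
    proof
      assume e: "e \<in> Xset V S"
      then obtain x y where xy: "e = {x,y}" "x \<in> V" "y \<in> V" "x \<noteq> y"
        unfolding Xset_def by blast
      then have "EQ V S x y" using X_char[OF sc xy(2-4)] e by simp
      then have "r x = r y" using EQr by blast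
      moreover obtain i where i: "i < k" "h i = r x" using hsurj[OF xy(2)] by blast
      ultimately have "x \<in> P i" "y \<in> P i" unfolding P_def using xy by auto
      then have "e \<in> cedges (P i)" unfolding cedges_iff using xy by blast
      then show "e \<in> (\<Union>i<k. cedges (P i))" using i by blast
    next
      assume "e \<in> (\<Union>i<k. cedges (P i))"
      then obtain i where "i < k" "e \<in> cedges (P i)" by blast
      then obtain x y where xy: "i < k" "e = {x,y}" "x \<in> P i" "y \<in> P i" "x \<noteq> y"
        unfolding cedges_iff by blast
      then have "x \<in> V" "y \<in> V" "r x = r y" unfolding P_def by auto
      then have "EQ V S x y" using EQr by blast
      then show "e \<in> Xset V S" using X_char[OF sc \<open>x \<in> V\<close> \<open>y \<in> V\<close> xy(5)] xy(2) by simp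
    qed
  qed
  show ?thesis using c1 c2 c3 c4 c5 c6 by blast
qed

end
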